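(* Consider an instance of additive multislope ski rental with states $0,\dots,k$, buying costs $b_0<b_1<\dots<b_k$ and rental rates $r_0>r_1>\dots>r_k\ge0$, such that $s_1<\dots<s_k$ where $s_i=\frac{b_i-b_{i-1}}{r_{i-1}-r_i}$. Let $c\ge1$. If there exists a $c$-competitive prudent profile, then there exists a $c$-competitive tight profile.
   Context: A profile is a vector $p(t)=(p_0(t),\dots,p_k(t))$ of nonnegative functions of $t\ge0$ with $\sum_ip_i(t)=1$ for all $t$ ($p_i(t)$ = probability of being in state $i$ at time $t$). Define $B_p(t)=\sum_ip_i(t)b_i$, $R_p(t)=\sum_ip_i(t)r_i$, $X_p(t)=B_p(t)+\int_0^tR_p(z)\,dz$ and $\textsc{opt}(t)=\min_i(b_i+r_it)$. A profile is $c$-competitive if $X_p(t)\le c\,\textsc{opt}(t)$ for all $t\ge0$. It is prudent if at every time the set $\{i:p_i(t)>0\}$ is either a single slope or two consecutive slopes. A prudent $c$-competitive profile $p$ is tight if $X_p(t)=c\cdot\textsc{opt}(t)$ for all $t$ with $p_k(t)<1$. *)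

theory Defs
  imports "HOL-Analysis.Analysis"
begin

text \<open>States are 0..k; a profile is p :: nat => real => real with p i t the
probability of being in state i at time t (only t >= 0 and i <= k matter).\<close>

definition Bp :: "nat \<Rightarrow> (nat \<Rightarrow> real) \<Rightarrow> (nat \<Rightarrow> real \<Rightarrow> real) \<Rightarrow> real \<Rightarrow> real" where
  "Bp k b p t = (\<Sum>i\<le>k. p i t * b i)"

definition Rp :: "nat \<Rightarrow> (nat \<Rightarrow> real) \<Rightarrow> (nat \<Rightarrow> real \<Rightarrow> real) \<Rightarrow> real \<Rightarrow> real" where
  "Rp k r p t = (\<Sum>i\<le>k. p i t * r i)"

definition Xp :: "nat \<Rightarrow> (nat \<Rightarrow> real) \<Rightarrow> (nat \<Rightarrow> real) \<Rightarrow> (nat \<Rightarrow> real \<Rightarrow> real) \<Rightarrow> real \<Rightarrow> real" where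
  "Xp k b r p t = Bp k b p t + integral {0..t} (Rp k r p)"

definition opt :: "nat \<Rightarrow> (nat \<Rightarrow> real) \<Rightarrow> (nat \<Rightarrow> real) \<Rightarrow> real \<Rightarrow> real" where
  "opt k b r t = Min ((\<lambda>i. b i + r i * t) ` {..k})"

text \<open>A profile: nonnegative, summing to 1 at every time t >= 0; we also require
the rental-rate function to be integrable on each [0,t] so that X_p is meaningful.\<close>
definition is_profile :: "nat \<Rightarrow> (nat \<Rightarrow> real) \<Rightarrow> (nat \<Rightarrow> real \<Rightarrow> real) \<Rightarrow> bool" where
  "is_profile k r p \<longleftrightarrow>
     (\<forall>t\<ge>0. (\<forall>i\<le>k. 0 \<le> p i t) \<and> (\<Sum>i\<le>k. p i t) = 1) \<and>
     (\<forall>t\<ge>0. Rp k r p integrable_on {0..t})"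

definition competitive :: "nat \<Rightarrow> (nat \<Rightarrow> real) \<Rightarrow> (nat \<Rightarrow> real) \<Rightarrow> real \<Rightarrow> (nat \<Rightarrow> real \<Rightarrow> real) \<Rightarrow> bool" where
  "competitive k b r c p \<longleftrightarrow> is_profile k r p \<and> (\<forall>t\<ge>0. Xp k b r p t \<le> c * opt k b r t)"

definition support :: "nat \<Rightarrow> (nat \<Rightarrow> real \<Rightarrow> real) \<Rightarrow> real \<Rightarrow> nat set" where
  "support k p t = {i. i \<le> k \<and> 0 < p i t}"

definition prudent :: "nat \<Rightarrow> (nat \<Rightarrow> real \<Rightarrow> real) \<Rightarrow> bool" where
  "prudent k p \<longleftrightarrow> (\<forall>t\<ge>0. (\<exists>i\<le>k. support k p t = {i}) \<or>
                              (\<exists>i. i + 1 \<le> k \<and> support k p t = {i, i + 1}))"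

definition tight :: "nat \<Rightarrow> (nat \<Rightarrow> real) \<Rightarrow> (nat \<Rightarrow> real) \<Rightarrow> real \<Rightarrow> (nat \<Rightarrow> real \<Rightarrow> real) \<Rightarrow> bool" where
  "tight k b r c p \<longleftrightarrow> prudent k p \<and> competitive k b r c p \<and>
     (\<forall>t\<ge>0. p k t < 1 \<longrightarrow> Xp k b r p t = c * opt k b r t)"

end

theory Submission
  imports Defs
begin



lemma cont_Max_insert:
  fixes f :: "nat \<Rightarrow> real \<Rightarrow> real"
  assumes "\<And>j. continuous_on S (f j)"
  shows "continuous_on S (\<lambda>x. Max (insert a ((\<lambda>j. f j x) ` {..<n})))"
proof (induction n)
  case 0
  then show ?case by simp
next
  case (Suc n)
  have eq: "(\<lambda>x. Max (insert a ((\<lambda>j. f j x) ` {..<Suc n}))) =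
            (\<lambda>x. max (f n x) (Max (insert a ((\<lambda>j. f j x) ` {..<n}))))"
  proof (rule ext)
    fix x
    show "Max (insert a ((\<lambda>j. f j x) ` {..<Suc n})) = max (f n x) (Max (insert a ((\<lambda>j. f j x) ` {..<n})))"
    proof (cases "n = 0")
      case True then show ?thesis by (simp add: lessThan_Suc max.commute)
    next
      case False
      define A where "A = (\<lambda>j. f j x) ` {..<n}"
      have fA: "finite A" "A \<noteq> {}" using False unfolding A_def by auto
      have "(\<lambda>j. f j x) ` {..<Suc n} = insert (f n x) A" unfolding A_def by (simp add: lessThan_Suc)
      then have "Max (insert a ((\<lambda>j. f j x) ` {..<Suc n})) = max a (max (f n x) (Max A))"
        using fA by simp
      moreover have "Max (insert a A) = max a (Max A)" using fA by simp
      ultimately show ?thesis unfolding A_def[symmetric] by (simp add: max.left_commute)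
    qed
  qed
  show ?case unfolding eq by (intro continuous_on_max assms Suc)
qed

lemma cont_Min_atMost:
  fixes f :: "nat \<Rightarrow> real \<Rightarrow> real"
  assumes "\<And>j. continuous_on S (f j)"
  shows "continuous_on S (\<lambda>x. Min ((\<lambda>j. f j x) ` {..n}))"
proof (induction n)
  case 0
  then show ?case using assms by simp
next
  case (Suc n)
  have eq: "(\<lambda>x. Min ((\<lambda>j. f j x) ` {..Suc n})) =
            (\<lambda>x. min (f (Suc n) x) (Min ((\<lambda>j. f j x) ` {..n})))"
    by (rule ext) (simp add: atMost_Suc)
  show ?case unfolding eq by (intro continuous_on_min assms Suc)
qed

locale ski =
  fixes k :: nat and b r :: "nat \<Rightarrow> real"
  assumes b_inc: "\<forall>i<k. b i < b (Suc i)"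
    and r_dec: "\<forall>i<k. r (Suc i) < r i"
    and r_nonneg: "0 \<le> r k"
    and s_inc: "\<forall>i. 1 \<le> i \<and> i < k \<longrightarrow>
        (b i - b (i - 1)) / (r (i - 1) - r i) < (b (Suc i) - b i) / (r i - r (Suc i))"
begin

definition m :: "nat \<Rightarrow> real" where "m j = (r (Suc j) - r j) / (b (Suc j) - b j)"
definition ell :: "nat \<Rightarrow> real \<Rightarrow> real" where "ell j x = r j + m j * (x - b j)"
definition phi :: "real \<Rightarrow> real" where
  "phi x = Max (insert (r k) ((\<lambda>j. ell j (max x (b 0))) ` {..<k}))"

lemma b_mono: "i \<le> j \<Longrightarrow> j \<le> k \<Longrightarrow> b i \<le> b j"
proof (induction j)
  case 0 then show ?case by simp
next
  case (Suc j)
  show ?case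
  proof (cases "i = Suc j")
    case True then show ?thesis by simp
  next
    case False
    then have "b i \<le> b j" using Suc by simp
    moreover have "b j < b (Suc j)" using b_inc Suc.prems by simp
    ultimately show ?thesis by simp
  qed
qed

lemma r_anti: "i \<le> j \<Longrightarrow> j \<le> k \<Longrightarrow> r j \<le> r i"
proof (induction j)
  case 0 then show ?case by simp
next
  case (Suc j)
  show ?case
  proof (cases "i = Suc j")
    case True then show ?thesis by simp
  next
    case False
    then have "r j \<le> r i" using Suc by simp
    moreover have "r (Suc j) < r j" using r_dec Suc.prems by simp
    ultimately show ?thesis by simp
  qed
qed

lemma r_nonneg': "i \<le> k \<Longrightarrow> 0 \<le> r i"
  using r_anti[of i k] r_nonneg by simp

lemma m_neg: "j < k \<Longrightarrow> m j < 0"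
  unfolding m_def using b_inc r_dec by (simp add: divide_neg_pos)

lemma m_inc: "Suc j < k \<Longrightarrow> m j < m (Suc j)"
proof -
  assume a: "Suc j < k"
  define s1 where "s1 = (b (Suc j) - b j) / (r j - r (Suc j))"
  define s2 where "s2 = (b (Suc (Suc j)) - b (Suc j)) / (r (Suc j) - r (Suc (Suc j)))"
  have "s1 < s2" using s_inc[rule_format, of "Suc j"] a unfolding s1_def s2_def by simp
  moreover have "0 < s1" unfolding s1_def using b_inc r_dec a by simp
  ultimately have "1 / s2 < 1 / s1" by (simp add: frac_less2)
  moreover have "m j = - (1 / s1)" unfolding m_def s1_def
    by (simp add: divide_simps; simp add: algebra_simps)
  moreover have "m (Suc j) = - (1 / s2)" unfolding m_def s2_def
    by (simp add: divide_simps; simp add: algebra_simps)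
  ultimately show ?thesis by simp
qed

lemma ell_right: assumes "j < k" shows "ell j (b (Suc j)) = r (Suc j)"
proof -
  have "b j < b (Suc j)" using b_inc assms by blast
  then have ne: "b (Suc j) - b j \<noteq> 0" by simp
  have "m j * (b (Suc j) - b j) = r (Suc j) - r j" unfolding m_def using ne by simp
  then show ?thesis unfolding ell_def by simp
qed

lemma ell_left: "ell j (b j) = r j"
  unfolding ell_def by simp

lemma ell_anti: "j < k \<Longrightarrow> x \<le> y \<Longrightarrow> ell j y \<le> ell j x"
  unfolding ell_def using m_neg[of j] by (simp add: mult_left_mono_neg)

lemma ell_diff: "Suc j < k \<Longrightarrow> ell j x - ell (Suc j) x = (m j - m (Suc j)) * (x - b (Suc j))"
proof -
  assume a: "Suc j < k"
  have "ell j x = ell j (b (Suc j)) + m j * (x - b (Suc j))" unfolding ell_def by (simp add: algebra_simps)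
  moreover have "ell (Suc j) x = r (Suc j) + m (Suc j) * (x - b (Suc j))" unfolding ell_def by simp
  ultimately show ?thesis using ell_right[of j] a by (simp add: algebra_simps)
qed

lemma ell_step_up: "Suc j < k \<Longrightarrow> b (Suc j) \<le> x \<Longrightarrow> ell j x \<le> ell (Suc j) x"
proof -
  assume a: "Suc j < k" "b (Suc j) \<le> x"
  have "(m j - m (Suc j)) * (x - b (Suc j)) \<le> 0" using m_inc[of j] a by (intro mult_nonpos_nonneg) auto
  then show ?thesis using ell_diff[of j x] a by simp
qed

lemma ell_step_down: "Suc j < k \<Longrightarrow> x \<le> b (Suc j) \<Longrightarrow> ell (Suc j) x \<le> ell j x"
proof -
  assume a: "Suc j < k" "x \<le> b (Suc j)"
  have "0 \<le> (m j - m (Suc j)) * (x - b (Suc j))" using m_inc[of j] a by (intro mult_nonpos_nonpos) auto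
  then show ?thesis using ell_diff[of j x] a by simp
qed

lemma ell_le_below: "j \<le> i \<Longrightarrow> i < k \<Longrightarrow> b i \<le> x \<Longrightarrow> ell j x \<le> ell i x"
proof (induction i)
  case 0 then show ?case by simp
next
  case (Suc i)
  show ?case
  proof (cases "j = Suc i")
    case True then show ?thesis by simp
  next
    case False
    then have "j \<le> i" using Suc by simp
    moreover have "b i \<le> x" using Suc b_inc by (meson Suc_lessD less_le_trans order.strict_implies_order)
    ultimately have "ell j x \<le> ell i x" using Suc by simp
    also have "\<dots> \<le> ell (Suc i) x" using ell_step_up[of i x] Suc by simp
    finally show ?thesis .
  qed
qed

lemma ell_le_above: "i \<le> j \<Longrightarrow> j < k \<Longrightarrow> x \<le> b (Suc i) \<Longrightarrow> ell j x \<le> ell i x"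
proof (induction j)
  case 0 then show ?case by simp
next
  case (Suc j)
  show ?case
  proof (cases "i = Suc j")
    case True then show ?thesis by simp
  next
    case False
    then have ij: "i \<le> j" using Suc by simp
    then have "ell j x \<le> ell i x" using Suc by simp
    moreover have "x \<le> b (Suc j)" using Suc b_mono[of "Suc i" "Suc j"] ij by simp
    then have "ell (Suc j) x \<le> ell j x" using ell_step_down[of j x] Suc by simp
    ultimately show ?thesis by simp
  qed
qed

lemma phi_seg: assumes "i < k" "b i \<le> x" "x \<le> b (Suc i)" shows "phi x = ell i x"
proof -
  have "b 0 \<le> x" using b_mono[of 0 i] assms by simp
  then have mx: "max x (b 0) = x" by simp
  have "r k \<le> r (Suc i)" using r_anti[of "Suc i" k] assms by simp
  also have "\<dots> = ell i (b (Suc i))" using ell_right assms by simp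
  also have "\<dots> \<le> ell i x" using ell_anti assms by simp
  finally have rk: "r k \<le> ell i x" .
  have "\<forall>j<k. ell j x \<le> ell i x"
    using ell_le_below[of _ i x] ell_le_above[of i _ x] assms by (meson nat_le_linear)
  then have all: "\<forall>y\<in>insert (r k) ((\<lambda>j. ell j x) ` {..<k}). y \<le> ell i x" using rk by blast
  have mem: "ell i x \<in> insert (r k) ((\<lambda>j. ell j x) ` {..<k})" using assms(1) by blast
  show ?thesis unfolding phi_def mx
    by (rule Max_eqI) (use all mem in auto)
qed

lemma phi_top: assumes "b k \<le> x" shows "phi x = r k"
proof (cases "k = 0")
  case True then show ?thesis unfolding phi_def by simp
next
  case False
  define x' where "x' = max x (b 0)"
  have x': "b k \<le> x'" using assms unfolding x'_def by simp
  have "b (k - 1) \<le> x'" using x' b_mono[of "k-1" k] by simp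
  then have "\<forall>j<k. ell j x' \<le> r k"
  proof (intro allI impI)
    fix j assume j: "j < k"
    have k1: "k - 1 < k" "Suc (k - 1) = k" using False by auto
    have "ell j x' \<le> ell (k-1) x'" using ell_le_below[of j "k-1" x'] j k1 \<open>b (k - 1) \<le> x'\<close> by simp
    also have "\<dots> \<le> ell (k-1) (b k)" using ell_anti[of "k-1" "b k" x'] k1 x' by simp
    also have "\<dots> = r k" using ell_right[of "k-1"] k1 by simp
    finally show "ell j x' \<le> r k" .
  qed
  then have all: "\<forall>y\<in>insert (r k) ((\<lambda>j. ell j x') ` {..<k}). y \<le> r k" by blast
  show ?thesis unfolding phi_def x'_def[symmetric]
    by (rule Max_eqI) (use all in auto)
qed

lemma phi_ge: "r k \<le> phi x"
  unfolding phi_def by (intro Max_ge) auto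

lemma phi_anti: assumes "x \<le> y" shows "phi y \<le> phi x"
proof -
  have "\<forall>j<k. ell j (max y (b 0)) \<le> phi x"
  proof (intro allI impI)
    fix j assume "j < k"
    then have "ell j (max y (b 0)) \<le> ell j (max x (b 0))" using ell_anti assms by simp
    also have "\<dots> \<le> phi x" unfolding phi_def using \<open>j<k\<close> by (intro Max_ge) auto
    finally show "ell j (max y (b 0)) \<le> phi x" .
  qed
  then have all: "\<forall>z\<in>insert (r k) ((\<lambda>j. ell j (max y (b 0))) ` {..<k}). z \<le> phi x"
    using phi_ge[of x] by blast
  show ?thesis unfolding phi_def[of y] using all by (subst Max_le_iff) auto
qed

lemma phi_b0: "phi (b 0) = r 0"
proof (cases "k = 0")
  case True then show ?thesis using phi_top by simp
next
  case False
  then have "b 0 < b (Suc 0)" using b_inc by auto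
  then have "phi (b 0) = ell 0 (b 0)" using phi_seg[of 0 "b 0"] False by simp
  then show ?thesis using ell_left[of 0] by (rule trans)
qed

lemma phi_le: "phi x \<le> r 0"
proof (cases "x \<le> b 0")
  case True
  then have e: "max x (b 0) = max (b 0) (b 0)" by simp
  have "phi x = phi (b 0)" unfolding phi_def by (simp only: e)
  then show ?thesis using phi_b0 by linarith
next
  case False then have "b 0 \<le> x" by simp
  then have "phi x \<le> phi (b 0)" by (rule phi_anti)
  then show ?thesis using phi_b0 by linarith
qed

lemma phi_nonneg: "0 \<le> phi x" using phi_ge[of x] r_nonneg by simp

lemma phi_cont: "continuous_on UNIV phi"
proof -
  have "continuous_on UNIV (\<lambda>x. Max (insert (r k) ((\<lambda>j. ell j (max x (b 0))) ` {..<k})))"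
  proof (rule cont_Max_insert)
    fix j
    show "continuous_on UNIV (\<lambda>x. ell j (max x (b 0)))" unfolding ell_def
      by (intro continuous_intros)
  qed
  then show ?thesis unfolding phi_def[abs_def] .
qed

end



lemma sum_one:
  fixes g :: "nat \<Rightarrow> real"
  assumes "a \<le> k" "\<And>j. j \<le> k \<Longrightarrow> j \<noteq> a \<Longrightarrow> g j = 0"
  shows "(\<Sum>j\<le>k. g j) = g a"
proof -
  have "(\<Sum>j\<le>k. g j) = (\<Sum>j\<in>{a}. g j)"
    by (rule sum.mono_neutral_right) (use assms in auto)
  then show ?thesis by simp
qed

lemma sum_two:
  fixes g :: "nat \<Rightarrow> real"
  assumes "a \<le> k" "a' \<le> k" "a \<noteq> a'" "\<And>j. j \<le> k \<Longrightarrow> j \<noteq> a \<Longrightarrow> j \<noteq> a' \<Longrightarrow> g j = 0"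
  shows "(\<Sum>j\<le>k. g j) = g a + g a'"
proof -
  have "(\<Sum>j\<le>k. g j) = (\<Sum>j\<in>{a, a'}. g j)"
    by (rule sum.mono_neutral_right) (use assms in auto)
  then show ?thesis using assms(3) by simp
qed

context ski
begin

lemma m_mul: "j < k \<Longrightarrow> m j * (b (Suc j) - b j) = r (Suc j) - r j"
proof -
  assume a: "j < k"
  have "b j < b (Suc j)" using b_inc a by blast
  then have ne: "b (Suc j) - b j \<noteq> 0" by simp
  then show ?thesis unfolding m_def by simp
qed

definition Oc :: "real \<Rightarrow> real \<Rightarrow> real" where "Oc c t = c * opt k b r t"

lemma Oc_cont: "continuous_on UNIV (Oc c)"
proof -
  have "continuous_on UNIV (\<lambda>t. Min ((\<lambda>j. b j + r j * t) ` {..k}))"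
    by (rule cont_Min_atMost) (intro continuous_intros)
  then have "continuous_on UNIV (opt k b r)" unfolding opt_def[abs_def] .
  then show ?thesis unfolding Oc_def[abs_def] by (intro continuous_intros)
qed

definition Cls :: "(real \<Rightarrow> real) set" where
  "Cls = {I. I 0 = 0 \<and> (\<forall>s t. 0 \<le> s \<and> s \<le> t \<longrightarrow> I s \<le> I t \<and> I t \<le> I s + r 0 * (t - s))}"

lemma ClsD: "I \<in> Cls \<Longrightarrow> 0 \<le> s \<Longrightarrow> s \<le> t \<Longrightarrow> I s \<le> I t \<and> I t \<le> I s + r 0 * (t - s)"
  unfolding Cls_def by blast

lemma Cls0: "I \<in> Cls \<Longrightarrow> I 0 = 0" unfolding Cls_def by blast

lemma Cls_nonneg: "I \<in> Cls \<Longrightarrow> 0 \<le> t \<Longrightarrow> 0 \<le> I t"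
  using ClsD[of I 0 t] Cls0[of I] by simp

lemma Cls_cont: assumes "I \<in> Cls" shows "continuous_on {0..} I"
proof -
  have "(r 0)-lipschitz_on {0..} I"
  proof (rule lipschitz_onI)
    show "0 \<le> r 0" using r_nonneg'[of 0] by simp
    fix x y :: real assume xy: "x \<in> {0..}" "y \<in> {0..}"
    show "dist (I x) (I y) \<le> r 0 * dist x y"
    proof (cases "x \<le> y")
      case True
      then have "I x \<le> I y \<and> I y \<le> I x + r 0 * (y - x)" using ClsD[OF assms, of x y] xy by simp
      then show ?thesis using True unfolding dist_real_def by (simp add: abs_if)
    next
      case False
      then have "I y \<le> I x \<and> I x \<le> I y + r 0 * (x - y)" using ClsD[OF assms, of y x] xy by simp
      then show ?thesis using False unfolding dist_real_def by (simp add: abs_if)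
    qed
  qed
  then show ?thesis by (rule lipschitz_on_continuous_on)
qed

definition S :: "real \<Rightarrow> (real \<Rightarrow> real) \<Rightarrow> real \<Rightarrow> real" where
  "S c I t = integral {0..t} (\<lambda>u. phi (Oc c u - I u))"

lemma Cls_int: assumes "I \<in> Cls" "0 \<le> a" shows "(\<lambda>u. phi (Oc c u - I u)) integrable_on {a..t}"
proof -
  have sub: "{a..t} \<subseteq> {0..}" using assms(2) by auto
  have "continuous_on {a..t} (\<lambda>u. Oc c u - I u)"
    using continuous_on_subset[OF Oc_cont[of c], of "{a..t}"] continuous_on_subset[OF Cls_cont[OF assms(1)] sub]
    by (intro continuous_on_diff) auto
  then have "continuous_on {a..t} (\<lambda>u. phi (Oc c u - I u))"
    by (rule continuous_on_compose2[OF phi_cont]) auto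
  then show ?thesis by (rule integrable_continuous_real)
qed

lemma integral_Cls:
  fixes f :: "real \<Rightarrow> real"
  assumes int: "\<And>t. 0 \<le> t \<Longrightarrow> f integrable_on {0..t}"
    and bnd: "\<And>u. 0 \<le> u \<Longrightarrow> 0 \<le> f u \<and> f u \<le> r 0"
  shows "(\<lambda>t. integral {0..t} f) \<in> Cls"
  unfolding Cls_def
proof (intro CollectI conjI allI impI)
  show "integral {0..0} f = 0" by simp
  fix s t :: real assume st: "0 \<le> s \<and> s \<le> t"
  have comb: "integral {0..s} f + integral {s..t} f = integral {0..t} f"
  proof -
    have "f integrable_on {0..t}" using int st by simp
    then show ?thesis using Henstock_Kurzweil_Integration.integral_combine[of 0 s t f] st by blast
  qed
  have ist: "f integrable_on {s..t}"
  proof -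
    have "f integrable_on {0..t}" using int st by simp
    moreover have "{s..t} \<subseteq> {0..t}" using st by auto
    ultimately show ?thesis by (rule integrable_subinterval_real)
  qed
  have "0 \<le> integral {s..t} f" using ist bnd st by (intro integral_nonneg) auto
  then show "integral {0..s} f \<le> integral {0..t} f" using comb by linarith
  have "integral {s..t} f \<le> integral {s..t} (\<lambda>_. r 0)"
    using ist bnd st by (intro integral_le) auto
  also have "\<dots> = r 0 * (t - s)" using st by simp
  finally show "integral {0..t} f \<le> integral {0..s} f + r 0 * (t - s)" using comb by linarith
qed

lemma S_Cls: "I \<in> Cls \<Longrightarrow> S c I \<in> Cls"
  unfolding S_def[abs_def]
  by (rule integral_Cls) (auto intro: Cls_int simp: phi_nonneg phi_le)

lemma S_mono: assumes "I \<in> Cls" "J \<in> Cls" "\<forall>t\<ge>0. I t \<le> J t" "0 \<le> t"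
  shows "S c I t \<le> S c J t"
  unfolding S_def
proof (rule integral_le)
  show "(\<lambda>u. phi (Oc c u - I u)) integrable_on {0..t}" using Cls_int assms by simp
  show "(\<lambda>u. phi (Oc c u - J u)) integrable_on {0..t}" using Cls_int assms by simp
  fix u assume "u \<in> {0..t}"
  then have "Oc c u - J u \<le> Oc c u - I u" using assms(3) by auto
  then show "phi (Oc c u - I u) \<le> phi (Oc c u - J u)" by (rule phi_anti)
qed

end



context ski
begin

lemma phi_prudent:
  assumes nn: "\<forall>i\<le>k. 0 \<le> p i t" and s1: "(\<Sum>i\<le>k. p i t) = 1"
    and pr: "(\<exists>i\<le>k. support k p t = {i}) \<or> (\<exists>i. i + 1 \<le> k \<and> support k p t = {i, i + 1})"
  shows "phi (Bp k b p t) \<le> Rp k r p t"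
proof -
  have zero: "p j t = 0" if "j \<le> k" "j \<notin> support k p t" for j
    using nn that unfolding support_def by force
  from pr show ?thesis
  proof
    assume "\<exists>i\<le>k. support k p t = {i}"
    then obtain i where i: "i \<le> k" "support k p t = {i}" by blast
    have z: "\<And>j. j \<le> k \<Longrightarrow> j \<noteq> i \<Longrightarrow> p j t = 0" using zero i by blast
    have "(\<Sum>j\<le>k. p j t) = p i t" by (rule sum_one) (use i z in auto)
    then have pi: "p i t = 1" using s1 by simp
    have B: "Bp k b p t = b i" unfolding Bp_def
      using sum_one[of i k "\<lambda>j. p j t * b j"] i z pi by simp
    have R: "Rp k r p t = r i" unfolding Rp_def
      using sum_one[of i k "\<lambda>j. p j t * r j"] i z pi by simp
    show ?thesis
    proof (cases "i < k")
      case True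
      have "b i \<le> b (Suc i)" using b_inc True by (simp add: less_imp_le)
      then have "phi (b i) = ell i (b i)" using phi_seg[of i "b i"] True by simp
      then show ?thesis using B R ell_left[of i] by simp
    next
      case False
      then have "i = k" using i by simp
      then show ?thesis using B R phi_top[of "b i"] by simp
    qed
  next
    assume "\<exists>i. i + 1 \<le> k \<and> support k p t = {i, i + 1}"
    then obtain i where i: "i + 1 \<le> k" "support k p t = {i, i + 1}" by blast
    have z: "\<And>j. j \<le> k \<Longrightarrow> j \<noteq> i \<Longrightarrow> j \<noteq> Suc i \<Longrightarrow> p j t = 0" using zero i by simp
    have ik: "i < k" "Suc i \<le> k" "i \<le> k" using i by auto
    have "(\<Sum>j\<le>k. p j t) = p i t + p (Suc i) t" by (rule sum_two) (use ik z in auto)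
    then have ps: "p i t = 1 - p (Suc i) t" using s1 by simp
    define a where "a = p (Suc i) t"
    have a01: "0 \<le> a" "a \<le> 1" using nn ik ps unfolding a_def by (auto dest: spec[of _ i] spec[of _ "Suc i"])
    have B: "Bp k b p t = (1 - a) * b i + a * b (Suc i)" unfolding Bp_def
      using sum_two[of i k "Suc i" "\<lambda>j. p j t * b j"] ik z ps unfolding a_def by simp
    have R: "Rp k r p t = (1 - a) * r i + a * r (Suc i)" unfolding Rp_def
      using sum_two[of i k "Suc i" "\<lambda>j. p j t * r j"] ik z ps unfolding a_def by simp
    have bb: "b i < b (Suc i)" using b_inc ik by simp
    have B1: "b i \<le> Bp k b p t"
    proof -
      have "0 \<le> a * (b (Suc i) - b i)" using a01 bb by simp
      then show ?thesis using B by (simp add: algebra_simps)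
    qed
    have B2: "Bp k b p t \<le> b (Suc i)"
    proof -
      have "0 \<le> (1 - a) * (b (Suc i) - b i)" using a01 bb by simp
      then show ?thesis using B by (simp add: algebra_simps)
    qed
    have "phi (Bp k b p t) = ell i (Bp k b p t)" using phi_seg ik B1 B2 by simp
    also have "\<dots> = r i + a * (m i * (b (Suc i) - b i))" unfolding ell_def B by (simp add: algebra_simps)
    also have "\<dots> = r i + a * (r (Suc i) - r i)" using m_mul[of i] ik by simp
    also have "\<dots> = Rp k r p t" using R by (simp add: algebra_simps)
    finally show ?thesis by simp
  qed
qed

definition idx :: "real \<Rightarrow> nat" where
  "idx x = (if b k \<le> x then k else Max {i. i \<le> k \<and> b i \<le> x})"

definition alpha :: "real \<Rightarrow> real" where
  "alpha x = (if b k \<le> x then 0 else (x - b (idx x)) / (b (Suc (idx x)) - b (idx x)))"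

definition wt :: "real \<Rightarrow> nat \<Rightarrow> real" where
  "wt x j = (1 - alpha x) * (if j = idx x then 1 else 0) + alpha x * (if j = Suc (idx x) then 1 else 0)"

lemma idx_prop: assumes "b 0 \<le> x" "x < b k"
  shows "idx x < k \<and> b (idx x) \<le> x \<and> x < b (Suc (idx x))"
proof -
  define A where "A = {i. i \<le> k \<and> b i \<le> x}"
  have fin: "finite A" unfolding A_def by simp
  have ne: "0 \<in> A" unfolding A_def using assms by simp
  have id: "idx x = Max A" unfolding idx_def A_def using assms by simp
  have mem: "Max A \<in> A" using fin ne Max_in by blast
  then have m1: "Max A \<le> k" "b (Max A) \<le> x" unfolding A_def by auto
  have mk: "Max A \<noteq> k" using m1 assms by auto
  then have lt: "Max A < k" using m1 by simp
  have "\<not> b (Suc (Max A)) \<le> x"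
  proof
    assume "b (Suc (Max A)) \<le> x"
    then have "Suc (Max A) \<in> A" using lt by (simp add: A_def)
    then have "Suc (Max A) \<le> Max A" using fin by simp
    then show False by simp
  qed
  then show ?thesis using id m1 lt by simp
qed

lemma wt_props: assumes x0: "b 0 \<le> x"
  shows "(\<forall>j\<le>k. 0 \<le> wt x j) \<and> (\<Sum>j\<le>k. wt x j) = 1 \<and> (\<Sum>j\<le>k. wt x j * b j) = min x (b k)
    \<and> (\<Sum>j\<le>k. wt x j * r j) = phi x
    \<and> ((\<exists>i\<le>k. {j. j \<le> k \<and> 0 < wt x j} = {i}) \<or> (\<exists>i. i + 1 \<le> k \<and> {j. j \<le> k \<and> 0 < wt x j} = {i, i + 1}))
    \<and> (b k \<le> x \<longrightarrow> wt x k = 1)"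
proof (cases "b k \<le> x")
  case True
  have w: "wt x j = (if j = k then 1 else 0)" for j unfolding wt_def alpha_def idx_def using True by simp
  have s1: "(\<Sum>j\<le>k. wt x j * f j) = f k" for f :: "nat \<Rightarrow> real"
    using sum_one[of k k "\<lambda>j. wt x j * f j"] w by simp
  have "(\<Sum>j\<le>k. wt x j) = 1" using s1[of "\<lambda>_. 1"] by simp
  moreover have "{j. j \<le> k \<and> 0 < wt x j} = {k}" using w by auto
  ultimately show ?thesis using s1[of b] s1[of r] w True phi_top[of x] by auto
next
  case False
  then have xl: "x < b k" by simp
  define i where "i = idx x"
  define a where "a = alpha x"
  have ip: "i < k" "b i \<le> x" "x < b (Suc i)" using idx_prop[OF x0 xl] unfolding i_def by auto
  have ad: "a = (x - b i) / (b (Suc i) - b i)" unfolding a_def alpha_def i_def using False by simp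
  have pos: "0 < b (Suc i) - b i" using ip by simp
  have a0: "0 \<le> a" unfolding ad using ip pos by simp
  have a1: "a < 1" unfolding ad using ip pos by (simp add: divide_less_eq)
  have amul: "a * (b (Suc i) - b i) = x - b i" unfolding ad using pos by simp
  have w: "wt x j = (1 - a) * (if j = i then 1 else 0) + a * (if j = Suc i then 1 else 0)" for j
    unfolding wt_def a_def i_def by simp
  have s2: "(\<Sum>j\<le>k. wt x j * f j) = (1 - a) * f i + a * f (Suc i)" for f :: "nat \<Rightarrow> real"
    using sum_two[of i k "Suc i" "\<lambda>j. wt x j * f j"] w ip by simp
  have nn: "\<forall>j\<le>k. 0 \<le> wt x j" using w a0 a1 by simp
  have sm: "(\<Sum>j\<le>k. wt x j) = 1" using s2[of "\<lambda>_. 1"] by simp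
  have sb: "(\<Sum>j\<le>k. wt x j * b j) = min x (b k)"
    using s2[of b] amul xl by (simp add: algebra_simps)
  have "phi x = ell i x" using phi_seg[of i x] ip by simp
  also have "\<dots> = r i + a * (m i * (b (Suc i) - b i))" unfolding ell_def using amul by simp
  also have "\<dots> = r i + a * (r (Suc i) - r i)" using m_mul[of i] ip by simp
  also have "\<dots> = (1 - a) * r i + a * r (Suc i)" by (simp add: algebra_simps)
  finally have sr: "(\<Sum>j\<le>k. wt x j * r j) = phi x" using s2[of r] by simp
  have supp: "(\<exists>i\<le>k. {j. j \<le> k \<and> 0 < wt x j} = {i}) \<or> (\<exists>i. i + 1 \<le> k \<and> {j. j \<le> k \<and> 0 < wt x j} = {i, i + 1})"
  proof (cases "a = 0")
    case True
    then have "{j. j \<le> k \<and> 0 < wt x j} = {i}" using w ip by auto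
    then show ?thesis using ip by auto
  next
    case False
    then have "{j. j \<le> k \<and> 0 < wt x j} = {i, i + 1}" using w ip a0 a1 by auto
    then show ?thesis using ip by auto
  qed
  show ?thesis using nn sm sb sr supp False by simp
qed

end



context ski
begin

lemma main:
  assumes pru: "prudent k p" and comp: "competitive k b r c p"
  shows "\<exists>q. tight k b r c q"
proof -
  have hp1: "\<And>t. 0 \<le> t \<Longrightarrow> (\<forall>i\<le>k. 0 \<le> p i t) \<and> (\<Sum>i\<le>k. p i t) = 1"
    using comp unfolding competitive_def is_profile_def by blast
  have hp2: "\<And>t. 0 \<le> t \<Longrightarrow> Rp k r p integrable_on {0..t}"
    using comp unfolding competitive_def is_profile_def by blast
  have hX: "\<And>t. 0 \<le> t \<Longrightarrow> Xp k b r p t \<le> c * opt k b r t"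
    using comp unfolding competitive_def by blast
  have hpr: "\<And>t. 0 \<le> t \<Longrightarrow> (\<exists>i\<le>k. support k p t = {i}) \<or> (\<exists>i. i + 1 \<le> k \<and> support k p t = {i, i + 1})"
    using pru unfolding prudent_def by blast
  define Ip where "Ip = (\<lambda>t. integral {0..t} (Rp k r p))"
  have Rb: "0 \<le> Rp k r p u \<and> Rp k r p u \<le> r 0" if u: "0 \<le> u" for u
  proof
    show "0 \<le> Rp k r p u" unfolding Rp_def using hp1[OF u] r_nonneg' by (intro sum_nonneg) simp
    have "Rp k r p u \<le> (\<Sum>i\<le>k. p i u * r 0)" unfolding Rp_def
      using hp1[OF u] r_anti by (intro sum_mono mult_left_mono) auto
    also have "\<dots> = r 0" using hp1[OF u] by (simp add: sum_distrib_right[symmetric])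
    finally show "Rp k r p u \<le> r 0" .
  qed
  have Bb: "b 0 \<le> Bp k b p u" if u: "0 \<le> u" for u
  proof -
    have "b 0 = (\<Sum>i\<le>k. p i u * b 0)" using hp1[OF u] by (simp add: sum_distrib_right[symmetric])
    also have "\<dots> \<le> Bp k b p u" unfolding Bp_def
      using hp1[OF u] b_mono by (intro sum_mono mult_left_mono) auto
    finally show ?thesis .
  qed
  have IpC: "Ip \<in> Cls" unfolding Ip_def by (rule integral_Cls) (use hp2 Rb in auto)
  have BpO: "Bp k b p u \<le> Oc c u - Ip u" if u: "0 \<le> u" for u
    using hX[OF u] unfolding Xp_def Oc_def Ip_def by simp
  have SIp: "S c Ip t \<le> Ip t" if t: "0 \<le> t" for t
  proof -
    have "S c Ip t \<le> integral {0..t} (Rp k r p)"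
      unfolding S_def
    proof (rule integral_le)
      show "(\<lambda>u. phi (Oc c u - Ip u)) integrable_on {0..t}" using Cls_int[OF IpC] by simp
      show "Rp k r p integrable_on {0..t}" using hp2 t by simp
      fix u assume "u \<in> {0..t}"
      then have u: "0 \<le> u" by simp
      have "phi (Oc c u - Ip u) \<le> phi (Bp k b p u)" using BpO[OF u] by (rule phi_anti)
      also have "\<dots> \<le> Rp k r p u" using phi_prudent hp1[OF u] hpr[OF u] by blast
      finally show "phi (Oc c u - Ip u) \<le> Rp k r p u" .
    qed
    then show ?thesis by (simp add: Ip_def)
  qed
  define P where "P = {I \<in> Cls. \<forall>t\<ge>0. S c I t \<le> I t}"
  define Ist where "Ist = (\<lambda>t. Inf ((\<lambda>I. I t) ` P))"
  have IpP: "Ip \<in> P" unfolding P_def using IpC SIp by blast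
  have PC: "I \<in> Cls" if "I \<in> P" for I using that unfolding P_def by blast
  have bdd: "bdd_below ((\<lambda>I. I t) ` P)" if t: "0 \<le> t" for t
    unfolding bdd_below_def using Cls_nonneg[OF PC t] by blast
  have lower: "Ist t \<le> I t" if "I \<in> P" "0 \<le> t" for I t
    unfolding Ist_def using that bdd by (intro cInf_lower) auto
  have glb: "y \<le> Ist t" if "\<And>I. I \<in> P \<Longrightarrow> y \<le> I t" for y t
    unfolding Ist_def using that IpP by (intro cInf_greatest) auto
  have IstC: "Ist \<in> Cls" unfolding Cls_def
  proof (intro CollectI conjI allI impI)
    have "Ist 0 \<le> 0" using lower[OF IpP, of 0] Cls0[OF IpC] by simp
    moreover have "0 \<le> Ist 0" by (rule glb) (simp add: Cls0 PC)
    ultimately show "Ist 0 = 0" by simp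
    fix s t :: real assume st: "0 \<le> s \<and> s \<le> t"
    show "Ist s \<le> Ist t"
    proof (rule glb)
      fix I assume I: "I \<in> P"
      show "Ist s \<le> I t" using lower[OF I, of s] ClsD[OF PC[OF I], of s t] st by simp
    qed
    have "Ist t - r 0 * (t - s) \<le> Ist s"
    proof (rule glb)
      fix I assume I: "I \<in> P"
      show "Ist t - r 0 * (t - s) \<le> I s" using lower[OF I, of t] ClsD[OF PC[OF I], of s t] st by simp
    qed
    then show "Ist t \<le> Ist s + r 0 * (t - s)" by simp
  qed
  have SIst: "S c Ist t \<le> Ist t" if t: "0 \<le> t" for t
  proof (rule glb)
    fix I assume I: "I \<in> P"
    have "S c Ist t \<le> S c I t" using S_mono[OF IstC PC[OF I] _ t] lower[OF I] by blast
    also have "\<dots> \<le> I t" using I t unfolding P_def by blast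
    finally show "S c Ist t \<le> I t" .
  qed
  have SIstP: "S c Ist \<in> P" unfolding P_def
    using S_Cls[OF IstC] S_mono[OF S_Cls[OF IstC] IstC] SIst by blast
  have fixI: "Ist t = S c Ist t" if t: "0 \<le> t" for t
    using lower[OF SIstP t] SIst[OF t] by simp
  define Bst where "Bst = (\<lambda>t. Oc c t - Ist t)"
  have Bst0: "b 0 \<le> Bst t" if t: "0 \<le> t" for t
    using Bb[OF t] BpO[OF t] lower[OF IpP t] unfolding Bst_def by simp
  define q where "q = (\<lambda>j t. wt (Bst t) j)"
  have W: "\<And>t. 0 \<le> t \<Longrightarrow> (\<forall>j\<le>k. 0 \<le> q j t) \<and> (\<Sum>j\<le>k. q j t) = 1
    \<and> Bp k b q t = min (Bst t) (b k) \<and> Rp k r q t = phi (Bst t)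
    \<and> ((\<exists>i\<le>k. support k q t = {i}) \<or> (\<exists>i. i + 1 \<le> k \<and> support k q t = {i, i + 1}))
    \<and> (b k \<le> Bst t \<longrightarrow> q k t = 1)"
    unfolding q_def Bp_def Rp_def support_def using wt_props[OF Bst0] by blast
  have Iq: "integral {0..t} (Rp k r q) = Ist t" if t: "0 \<le> t" for t
  proof -
    have "integral {0..t} (Rp k r q) = integral {0..t} (\<lambda>u. phi (Oc c u - Ist u))"
      by (rule Henstock_Kurzweil_Integration.integral_cong) (use W in \<open>auto simp: Bst_def\<close>)
    then show ?thesis using fixI[OF t] unfolding S_def by simp
  qed
  have intq: "Rp k r q integrable_on {0..t}" if t: "0 \<le> t" for t
  proof -
    have "(\<lambda>u. phi (Oc c u - Ist u)) integrable_on {0..t}" using Cls_int[OF IstC] by simp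
    then show ?thesis
      by (rule iffD1[OF Henstock_Kurzweil_Integration.integrable_cong, rotated]) (use W in \<open>auto simp: Bst_def\<close>)
  qed
  have Xq: "Xp k b r q t = min (Bst t) (b k) + Ist t" if t: "0 \<le> t" for t
    unfolding Xp_def using W[OF t] Iq[OF t] by simp
  have prud: "prudent k q" unfolding prudent_def using W by blast
  have prof: "is_profile k r q" unfolding is_profile_def using W intq by blast
  have cq: "\<forall>t\<ge>0. Xp k b r q t \<le> c * opt k b r t"
  proof (intro allI impI)
    fix t :: real assume t: "0 \<le> t"
    show "Xp k b r q t \<le> c * opt k b r t" using Xq[OF t] unfolding Bst_def Oc_def by simp
  qed
  have eq: "\<forall>t\<ge>0. q k t < 1 \<longrightarrow> Xp k b r q t = c * opt k b r t"
  proof (intro allI impI)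
    fix t :: real assume t: "0 \<le> t" and qk: "q k t < 1"
    then have "Bst t < b k" using W[OF t] by force
    then show "Xp k b r q t = c * opt k b r t" using Xq[OF t] unfolding Bst_def Oc_def by simp
  qed
  have "tight k b r c q" unfolding tight_def competitive_def using prud prof cq eq by blast
  then show ?thesis by blast
qed

end


theorem lemma4p5:
  fixes k :: nat and b r :: "nat \<Rightarrow> real" and c :: real
  assumes b_nonneg: "0 \<le> b 0"
    and b_inc: "\<forall>i<k. b i < b (Suc i)"
    and r_dec: "\<forall>i<k. r (Suc i) < r i"
    and r_nonneg: "0 \<le> r k"
    and s_inc: "\<forall>i. 1 \<le> i \<and> i < k \<longrightarrow>
        (b i - b (i - 1)) / (r (i - 1) - r i) < (b (Suc i) - b i) / (r i - r (Suc i))"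
    and c_ge: "1 \<le> c"
    and ex: "\<exists>p. prudent k p \<and> competitive k b r c p"
  shows "\<exists>q. tight k b r c q"
proof -
  interpret ski k b r
    using b_inc r_dec r_nonneg s_inc by (unfold_locales) auto
  from ex obtain p where "prudent k p" "competitive k b r c p" by blast
  then show ?thesis by (rule main)
qed

end
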